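(* Let $(\mathbf{X},\mathbf{A})\sim \textsf{CSBM}(n,p,q,\boldsymbol{\mu},\sigma^2)$ and for an edge $(i,j)$ let $\mathbf{X}'_{ij}=\begin{pmatrix}\mathbf{X}_i\\ \mathbf{X}_j\end{pmatrix}\in\mathbb{R}^{2d}$. Consider the problem of predicting the label $y\in\{0,1\}$ of an edge $(i,j)$ ($y=1$ if intra-class, $y=0$ if inter-class) from $\mathbf{X}'_{ij}$. The Bayes optimal classifier for $\mathbf{X}'_{ij}$ is realized by $$h^*(\boldsymbol{x})=\begin{cases}0,& \text{if } p\cosh\!\left(\frac{\boldsymbol{x}^T\boldsymbol{\mu}'}{\sigma^2}\right)\le q\cosh\!\left(\frac{\boldsymbol{x}^T\boldsymbol{\nu}'}{\sigma^2}\right),\\ 1,&\text{otherwise},\end{cases}$$ where $\boldsymbol{\mu}'=\begin{pmatrix}\boldsymbol{\mu}\\ \boldsymbol{\mu}\end{pmatrix}$ and $\boldsymbol{\nu}'=\begin{pmatrix}\boldsymbol{\mu}\\ -\boldsymbol{\mu}\end{pmatrix}$.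
   Context: CSBM: fix $n,d\in\mathbb{N}$, $\boldsymbol{\mu}\in\mathbb{R}^d$, $\sigma>0$, $p,q\in[0,1]$ with $p+q>0$. Draw $\epsilon_1,\dots,\epsilon_n$ i.i.d. Bernoulli$(1/2)$, classes $C_k=\{j:\epsilon_j=k\}$. Independently $\mathbf{X}_i\sim N((2\epsilon_i-1)\boldsymbol{\mu},\sigma^2\mathbf{I})$. Adjacency entries $a_{ij}\sim\mathrm{Ber}(p)$ if $i,j$ are in the same class and $\mathrm{Ber}(q)$ otherwise. For an edge $(i,j)$ of the graph (i.e. a pair conditioned on $a_{ij}=1$), the label is $y=1$ if $i,j$ are in the same class and $y=0$ otherwise, so $\Pr[y=1]=p/(p+q)$, $\Pr[y=0]=q/(p+q)$; given $y=1$, $\mathbf{X}'_{ij}\sim N(\pm\boldsymbol{\mu}',\sigma^2\mathbf{I})$ with each sign equally likely, and given $y=0$, $\mathbf{X}'_{ij}\sim N(\pm\boldsymbol{\nu}',\sigma^2\mathbf{I})$ with each sign equally likely. The Bayes optimal classifier is $\boldsymbol{x}\mapsto\arg\max_{c\in\{0,1\}}\Pr[y=c\mid \mathbf{X}'_{ij}=\boldsymbol{x}]$. *)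

theory Defs
  imports "HOL-Analysis.Analysis"
begin

definition gauss_density :: "real \<Rightarrow> 'a::euclidean_space \<Rightarrow> 'a \<Rightarrow> real" where
  "gauss_density s2 m x = (2 * pi * s2) powr (- real DIM('a) / 2) * exp (- (norm (x - m))\<^sup>2 / (2 * s2))"

(* Edge feature X'_{ij} = (X_i, X_j) in R^{2d}, modelled as a pair of vectors in R^d. *)
definition mu' :: "real^'n \<Rightarrow> (real^'n) \<times> (real^'n)" where
  "mu' \<mu> = (\<mu>, \<mu>)"

definition nu' :: "real^'n \<Rightarrow> (real^'n) \<times> (real^'n)" where
  "nu' \<mu> = (\<mu>, - \<mu>)"

definition edge_prior :: "real \<Rightarrow> real \<Rightarrow> nat \<Rightarrow> real" where
  "edge_prior p q c = (if c = 1 then p / (p + q) else q / (p + q))"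

definition edge_cond_density :: "real^'n \<Rightarrow> real \<Rightarrow> nat \<Rightarrow> (real^'n) \<times> (real^'n) \<Rightarrow> real" where
  "edge_cond_density \<mu> s2 c x =
     (if c = 1 then (gauss_density s2 (mu' \<mu>) x + gauss_density s2 (- mu' \<mu>) x) / 2
      else (gauss_density s2 (nu' \<mu>) x + gauss_density s2 (- nu' \<mu>) x) / 2)"

definition edge_posterior :: "real \<Rightarrow> real \<Rightarrow> real^'n \<Rightarrow> real \<Rightarrow> nat \<Rightarrow> (real^'n) \<times> (real^'n) \<Rightarrow> real" where
  "edge_posterior p q \<mu> s2 c x =
     edge_prior p q c * edge_cond_density \<mu> s2 c x /
     (\<Sum>c'\<in>{0,1}. edge_prior p q c' * edge_cond_density \<mu> s2 c' x)"

definition is_bayes_optimal :: "(nat \<Rightarrow> 'x \<Rightarrow> real) \<Rightarrow> ('x \<Rightarrow> nat) \<Rightarrow> bool" where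
  "is_bayes_optimal post h \<longleftrightarrow> (\<forall>x. h x \<in> {0,1} \<and> (\<forall>c\<in>{0,1}. post c x \<le> post (h x) x))"

definition h_star :: "real \<Rightarrow> real \<Rightarrow> real^'n \<Rightarrow> real \<Rightarrow> (real^'n) \<times> (real^'n) \<Rightarrow> nat" where
  "h_star p q \<mu> s2 x =
     (if p * cosh ((x \<bullet> mu' \<mu>) / s2) \<le> q * cosh ((x \<bullet> nu' \<mu>) / s2) then 0 else 1)"

end

theory Submission
  imports Defs
begin

lemma gauss_pair:
  fixes m x :: "'a::euclidean_space"
  assumes "s2 > 0"
  shows "gauss_density s2 m x + gauss_density s2 (-m) x =
    2 * ((2 * pi * s2) powr (- real DIM('a) / 2) * exp (- ((norm x)\<^sup>2 + (norm m)\<^sup>2) / (2 * s2)))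
      * cosh ((x \<bullet> m) / s2)"
proof -
  let ?C = "(2 * pi * s2) powr (- real DIM('a) / 2)"
  let ?E = "exp (- ((norm x)\<^sup>2 + (norm m)\<^sup>2) / (2 * s2))"
  have n1: "(norm (x - m))\<^sup>2 = (norm x)\<^sup>2 + (norm m)\<^sup>2 - 2 * (x \<bullet> m)"
    by (simp add: power2_norm_eq_inner inner_diff_left inner_diff_right inner_commute)
  have n2: "(norm (x - - m))\<^sup>2 = (norm x)\<^sup>2 + (norm m)\<^sup>2 + 2 * (x \<bullet> m)"
    by (simp add: power2_norm_eq_inner inner_add_left inner_add_right inner_commute)
  have e1: "exp (- (norm (x - m))\<^sup>2 / (2 * s2)) = ?E * exp ((x \<bullet> m) / s2)"
    unfolding n1 exp_add[symmetric] using assms by (intro arg_cong[where f=exp]) (simp add: field_simps)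
  have e2: "exp (- (norm (x - - m))\<^sup>2 / (2 * s2)) = ?E * exp (- ((x \<bullet> m) / s2))"
    unfolding n2 exp_add[symmetric] using assms by (intro arg_cong[where f=exp]) (simp add: field_simps)
  show ?thesis
    unfolding gauss_density_def e1 e2 cosh_field_def by (simp add: algebra_simps)
qed

lemma div_pos_le_iff: "(S::real) > 0 \<Longrightarrow> (A / S \<le> B / S) = (A \<le> B)"
  by (simp add: divide_le_cancel)

lemma norm_mu_nu: "norm (mu' \<mu>) = norm (nu' \<mu>)"
  by (simp add: mu'_def nu'_def norm_Pair)

theorem lemma8:
  fixes \<mu> :: "real^'n" and \<sigma> p q :: real
  assumes "\<sigma> > 0" and "0 \<le> p" "p \<le> 1" and "0 \<le> q" "q \<le> 1" and "p + q > 0"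
  shows "is_bayes_optimal (edge_posterior p q \<mu> (\<sigma>\<^sup>2)) (h_star p q \<mu> (\<sigma>\<^sup>2))"
  unfolding is_bayes_optimal_def
proof (intro allI conjI ballI)
  fix x :: "(real^'n) \<times> (real^'n)"
  have s: "\<sigma>\<^sup>2 > 0" using assms by simp
  define K where "K = (2 * pi * \<sigma>\<^sup>2) powr (- real DIM((real^'n) \<times> (real^'n)) / 2)
     * exp (- ((norm x)\<^sup>2 + (norm (mu' \<mu>))\<^sup>2) / (2 * \<sigma>\<^sup>2))"
  have Kpos: "K > 0" unfolding K_def using s by simp
  define a where "a = cosh ((x \<bullet> mu' \<mu>) / \<sigma>\<^sup>2)"
  define b where "b = cosh ((x \<bullet> nu' \<mu>) / \<sigma>\<^sup>2)"
  have apos: "a > 0" "b > 0" unfolding a_def b_def by auto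
  have d1: "edge_cond_density \<mu> (\<sigma>\<^sup>2) 1 x = K * a"
    unfolding edge_cond_density_def using gauss_pair[OF s, of "mu' \<mu>" x]
    by (simp add: K_def a_def)
  have d0: "edge_cond_density \<mu> (\<sigma>\<^sup>2) 0 x = K * b"
    unfolding edge_cond_density_def using gauss_pair[OF s, of "nu' \<mu>" x]
    by (simp add: K_def b_def norm_mu_nu)
  define S where "S = p / (p + q) * (K * a) + q / (p + q) * (K * b)"
  have Spos: "S > 0"
  proof -
    have "p * a + q * b > 0"
      using assms apos by (cases "p > 0") (auto intro: add_pos_nonneg add_nonneg_pos)
    then have "(p * a + q * b) * K / (p + q) > 0" using Kpos assms by simp
    moreover have "S = (p * a + q * b) * K / (p + q)" unfolding S_def by (simp add: field_simps add_divide_distrib)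
    ultimately show ?thesis by simp
  qed
  have P1: "edge_posterior p q \<mu> (\<sigma>\<^sup>2) 1 x = (p / (p + q) * (K * a)) / S"
    unfolding edge_posterior_def S_def using d1 d0 by (simp add: edge_prior_def add.commute)
  have P0: "edge_posterior p q \<mu> (\<sigma>\<^sup>2) 0 x = (q / (p + q) * (K * b)) / S"
    unfolding edge_posterior_def S_def using d1 d0 by (simp add: edge_prior_def add.commute)
  have h: "h_star p q \<mu> (\<sigma>\<^sup>2) x = (if p * a \<le> q * b then 0 else 1)"
    unfolding h_star_def a_def b_def by simp
  show "h_star p q \<mu> (\<sigma>\<^sup>2) x \<in> {0, 1}" unfolding h by simp
  fix c :: nat assume c: "c \<in> {0, 1}"
  have key: "(p / (p + q) * (K * a) \<le> q / (p + q) * (K * b)) = (p * a \<le> q * b)"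
  proof -
    have "p / (p + q) * (K * a) = (p * a) * (K / (p + q))" by (simp add: field_simps)
    moreover have "q / (p + q) * (K * b) = (q * b) * (K / (p + q))" by (simp add: field_simps)
    moreover have "K / (p + q) > 0" using Kpos assms by simp
    ultimately show ?thesis by (metis mult_le_cancel_right_pos)
  qed
  show "edge_posterior p q \<mu> (\<sigma>\<^sup>2) c x \<le> edge_posterior p q \<mu> (\<sigma>\<^sup>2) (h_star p q \<mu> (\<sigma>\<^sup>2) x) x"
  proof -
    have m: "p / (p + q) * (K * a) / S \<le> q / (p + q) * (K * b) / S \<longleftrightarrow> p * a \<le> q * b"
      by (subst div_pos_le_iff[OF Spos]) (rule key)
    have m2: "q / (p + q) * (K * b) / S \<le> p / (p + q) * (K * a) / S \<longleftrightarrow> q / (p + q) * (K * b) \<le> p / (p + q) * (K * a)"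
      by (rule div_pos_le_iff[OF Spos])
    show ?thesis
    proof (cases "p * a \<le> q * b")
      case True
      then show ?thesis using c m P0 P1 unfolding h by auto
    next
      case False
      then show ?thesis using c m2 key P0 P1 unfolding h by auto
    qed
  qed
qed

end
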